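(* Let $\Sigma=\{xtyxsy\approx xtxyxsy,\ xtysyx\approx xtysxyx\}$. Let $\mathbf w=\mathbf v_1\mathbf v_2x\mathbf v_3$ where $\mathbf v_1,\mathbf v_2,\mathbf v_3$ are words and $x$ is a letter. If $\mathbf v_1$ contains $x$ and $\mathbf v_2$ contains no letter that is simple in $\mathbf w$, then $\Sigma$ implies the identity $\mathbf w\approx\mathbf v_1x\mathbf v_2x\mathbf v_3$ (i.e., every monoid satisfying $\Sigma$ satisfies it).
   Context: Words are elements of the free monoid over a countably infinite alphabet. A letter is simple in a word if it occurs in it exactly once. *)

theory Defs
  imports Main
begin

type_synonym word = "nat list"

definition word_val :: "(nat \<Rightarrow> 'm::monoid_mult) \<Rightarrow> word \<Rightarrow> 'm" where
  "word_val \<phi> w = prod_list (map \<phi> w)"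

definition satisfies :: "'m::monoid_mult itself \<Rightarrow> word \<times> word \<Rightarrow> bool" where
  "satisfies T uv \<longleftrightarrow> (\<forall>\<phi> :: nat \<Rightarrow> 'm. word_val \<phi> (fst uv) = word_val \<phi> (snd uv))"

definition simple_in :: "nat \<Rightarrow> word \<Rightarrow> bool" where
  "simple_in a w \<longleftrightarrow> count_list w a = 1"

text \<open>Sigma = {xtyxsy = xtxyxsy, xtysyx = xtysxyx} with x=0, t=1, y=2, s=3.\<close>
definition Sigma :: "(word \<times> word) set" where
  "Sigma = {([0,1,2,0,3,2], [0,1,0,2,0,3,2]), ([0,1,2,3,2,0], [0,1,2,3,0,2,0])}"

end

theory Submission
  imports Defs
begin

lemma wv_simps[simp]:
  "word_val \<phi> [] = 1"
  "word_val \<phi> (a # u) = \<phi> a * word_val \<phi> u"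
  "word_val \<phi> (u @ v) = word_val \<phi> u * word_val \<phi> v"
  by (simp_all add: word_val_def)

lemma ctx:
  fixes l r c d :: "'m::monoid_mult"
  assumes "l = r" shows "c * l * d = c * r * d"
  using assms by simp

lemma keyK:
  fixes \<phi> :: "nat \<Rightarrow> 'm::monoid_mult"
  assumes E1: "\<And>a t b s::'m. a*t*b*a*s*b = a*t*a*b*a*s*b"
    and E2: "\<And>a t b s::'m. a*t*b*s*b*a = a*t*b*s*a*b*a"
    and xP: "x \<in> set P" and yPQ: "y \<in> set P \<or> y \<in> set Q"
  shows "word_val \<phi> (P @ y # x # Q) = word_val \<phi> (P @ x # y # x # Q)"
proof -
  have Sq: "a*t*a*s = a*t*a*a*s" for a t s :: 'm
  proof -
    have "a*t*1*a*s*1 = a*t*a*1*a*s*1" by (rule E1)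
    then show ?thesis by simp
  qed
  show ?thesis
  proof (cases "y \<in> set Q")
    case True
    obtain P1 P2 where P: "P = P1 @ x # P2" using xP split_list by metis
    obtain Q1 Q2 where Q: "Q = Q1 @ y # Q2" using True split_list by metis
    have "word_val \<phi> P1 * (\<phi> x * word_val \<phi> P2 * \<phi> y * \<phi> x * word_val \<phi> Q1 * \<phi> y) * word_val \<phi> Q2
      = word_val \<phi> P1 * (\<phi> x * word_val \<phi> P2 * \<phi> x * \<phi> y * \<phi> x * word_val \<phi> Q1 * \<phi> y) * word_val \<phi> Q2"
      by (rule ctx, rule E1)
    then show ?thesis by (simp add: P Q mult.assoc)
  next
    case False
    then have yP: "y \<in> set P" using yPQ by simp
    show ?thesis
    proof (cases "\<exists>A B. P = A @ y # B \<and> x \<in> set B")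
      case True
      then obtain A B where P: "P = A @ y # B" and xB: "x \<in> set B" by blast
      obtain B1 B2 where B: "B = B1 @ x # B2" using xB split_list by metis
      let ?A = "word_val \<phi> A" and ?B = "word_val \<phi> B" and ?B1 = "word_val \<phi> B1"
        and ?B2 = "word_val \<phi> B2" and ?Q = "word_val \<phi> Q" and ?x = "\<phi> x" and ?y = "\<phi> y"
      have BB: "?B = ?B1 * ?x * ?B2" by (simp add: B mult.assoc)
      have "word_val \<phi> (P @ y # x # Q) = ?A * (?y * ?B * ?y * (?x * ?Q))"
        by (simp add: P mult.assoc)
      also have "\<dots> = ?A * (?y * ?B * ?y * ?y * (?x * ?Q))"
        using Sq[of ?y ?B "?x * ?Q"] by (simp add: mult.assoc)
      also have "\<dots> = (?A * ?y * ?B1) * (?x * ?B2 * ?y * ?y * ?x) * ?Q"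
        by (simp add: BB mult.assoc)
      also have "\<dots> = (?A * ?y * ?B1) * (?x * ?B2 * ?y * 1 * ?x * ?y * ?x) * ?Q"
        using E2[of ?x ?B2 ?y 1] by simp
      also have "\<dots> = ?A * (?y * ?B * ?y * ?x * 1 * ?y * ?x) * ?Q"
        by (simp add: BB mult.assoc)
      also have "\<dots> = ?A * (?y * ?B * ?x * ?y * ?x) * ?Q"
        using E1[of ?y ?B ?x 1] by (simp add: mult.assoc)
      also have "\<dots> = word_val \<phi> (P @ x # y # x # Q)"
        by (simp add: P mult.assoc)
      finally show ?thesis .
    next
      case False
      obtain C D where P: "P = C @ x # D" and xC: "x \<notin> set C"
        using xP split_list_first by metis
      show ?thesis
      proof (cases "y = x")
        case True
        have "word_val \<phi> C * (\<phi> x * word_val \<phi> D * \<phi> x * (\<phi> x * word_val \<phi> Q)) * 1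
          = word_val \<phi> C * (\<phi> x * word_val \<phi> D * \<phi> x * \<phi> x * (\<phi> x * word_val \<phi> Q)) * 1"
          by (rule ctx, rule Sq)
        then show ?thesis by (simp add: P True mult.assoc)
      next
        case yx: False
        have "y \<notin> set C"
        proof
          assume "y \<in> set C"
          then obtain A B' where "C = A @ y # B'" using split_list by metis
          then have "P = A @ y # (B' @ x # D) \<and> x \<in> set (B' @ x # D)" by (simp add: P)
          then show False using False by blast
        qed
        then have "y \<in> set D" using yP yx by (simp add: P)
        then obtain D1 E where D: "D = D1 @ y # E" using split_list by metis
        have "word_val \<phi> C * (\<phi> x * word_val \<phi> D1 * \<phi> y * word_val \<phi> E * \<phi> y * \<phi> x) * word_val \<phi> Q
          = word_val \<phi> C * (\<phi> x * word_val \<phi> D1 * \<phi> y * word_val \<phi> E * \<phi> x * \<phi> y * \<phi> x) * word_val \<phi> Q"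
          by (rule ctx, rule E2)
        then show ?thesis by (simp add: P D mult.assoc)
      qed
    qed
  qed
qed

lemma mainL:
  fixes \<phi> :: "nat \<Rightarrow> 'm::monoid_mult"
  assumes E1: "\<And>a t b s::'m. a*t*b*a*s*b = a*t*a*b*a*s*b"
    and E2: "\<And>a t b s::'m. a*t*b*s*b*a = a*t*b*s*a*b*a"
    and xP: "x \<in> set v1"
  shows "(\<forall>a\<in>set v2. count_list (v1 @ v2 @ [x] @ v3) a \<noteq> 1) \<Longrightarrow>
    word_val \<phi> (v1 @ v2 @ [x] @ v3) = word_val \<phi> (v1 @ [x] @ v2 @ [x] @ v3)"
proof (induction v2 arbitrary: v3 rule: rev_induct)
  case Nil
  obtain P1 P2 where P: "v1 = P1 @ x # P2" using xP split_list by metis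
  have h: "\<phi> x * word_val \<phi> P2 * 1 * \<phi> x * word_val \<phi> v3 * 1
     = \<phi> x * word_val \<phi> P2 * \<phi> x * 1 * \<phi> x * word_val \<phi> v3 * 1"
    by (rule E1)
  have "word_val \<phi> P1 * (\<phi> x * word_val \<phi> P2 * 1 * \<phi> x * word_val \<phi> v3 * 1) * 1
     = word_val \<phi> P1 * (\<phi> x * word_val \<phi> P2 * \<phi> x * 1 * \<phi> x * word_val \<phi> v3 * 1) * 1"
    by (rule ctx[OF h])
  then show ?case by (simp add: P mult.assoc)
next
  case (snoc y u)
  have cy: "count_list (v1 @ (u @ [y]) @ [x] @ v3) y \<noteq> 1" using snoc.prems by simp
  have yin: "y \<in> set (v1 @ u) \<or> y \<in> set v3"
  proof (rule ccontr)
    assume "\<not> ?thesis"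
    then have "y \<notin> set v1" "y \<notin> set u" "y \<notin> set v3" by auto
    moreover have "y \<noteq> x" using xP \<open>y \<notin> set v1\<close> by auto
    ultimately have "count_list (v1 @ (u @ [y]) @ [x] @ v3) y = 1"
      by (simp add: count_list_0_iff)
    then show False using cy by simp
  qed
  have IHp: "\<forall>a\<in>set u. count_list (v1 @ u @ [x] @ (y # x # v3)) a \<noteq> 1"
  proof
    fix a assume a: "a \<in> set u"
    have "count_list (v1 @ (u @ [y]) @ [x] @ v3) a \<noteq> 1" using snoc.prems a by simp
    moreover have "count_list u a \<noteq> 0" using a by (simp add: count_list_0_iff)
    ultimately show "count_list (v1 @ u @ [x] @ (y # x # v3)) a \<noteq> 1" by simp
  qed
  have "word_val \<phi> (v1 @ (u @ [y]) @ [x] @ v3) = word_val \<phi> ((v1 @ u) @ y # x # v3)" by simp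
  also have "\<dots> = word_val \<phi> ((v1 @ u) @ x # y # x # v3)"
    by (rule keyK[OF E1 E2]) (use xP yin in auto)
  also have "\<dots> = word_val \<phi> (v1 @ u @ [x] @ (y # x # v3))" by simp
  also have "\<dots> = word_val \<phi> (v1 @ [x] @ u @ [x] @ (y # x # v3))" using snoc.IH IHp by blast
  also have "\<dots> = word_val \<phi> ((v1 @ x # u) @ x # y # x # v3)" by simp
  also have "\<dots> = word_val \<phi> ((v1 @ x # u) @ y # x # v3)"
    by (rule keyK[OF E1 E2, symmetric]) (use xP yin in auto)
  also have "\<dots> = word_val \<phi> (v1 @ [x] @ (u @ [y]) @ [x] @ v3)" by simp
  finally show ?case .
qed

theorem lemma3p3:
  fixes v1 v2 v3 :: word and x :: nat and T :: "'m::monoid_mult itself"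
  assumes "\<forall>p\<in>Sigma. satisfies T p"
    and "x \<in> set v1"
    and "\<forall>a\<in>set v2. \<not> simple_in a (v1 @ v2 @ [x] @ v3)"
  shows "satisfies T (v1 @ v2 @ [x] @ v3, v1 @ [x] @ v2 @ [x] @ v3)"
proof -
  have S1: "satisfies T ([0,1,2,0,3,2], [0,1,0,2,0,3,2])" using assms(1) by (simp add: Sigma_def)
  have S2: "satisfies T ([0,1,2,3,2,0], [0,1,2,3,0,2,0])" using assms(1) by (simp add: Sigma_def)
  have E1: "a*t*b*a*s*b = a*t*a*b*a*s*b" for a t b s :: 'm
  proof -
    let ?f = "\<lambda>n::nat. if n = 0 then a else if n = 1 then t else if n = 2 then b else s"
    have "\<forall>\<phi>::nat \<Rightarrow> 'm. word_val \<phi> [0,1,2,0,3,2] = word_val \<phi> [0,1,0,2,0,3,2]"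
      using S1 unfolding satisfies_def by simp
    then have "word_val ?f [0,1,2,0,3,2] = word_val ?f [0,1,0,2,0,3,2]" by (rule spec)
    then show ?thesis by (simp add: mult.assoc)
  qed
  have E2: "a*t*b*s*b*a = a*t*b*s*a*b*a" for a t b s :: 'm
  proof -
    let ?f = "\<lambda>n::nat. if n = 0 then a else if n = 1 then t else if n = 2 then b else s"
    have "\<forall>\<phi>::nat \<Rightarrow> 'm. word_val \<phi> [0,1,2,3,2,0] = word_val \<phi> [0,1,2,3,0,2,0]"
      using S2 unfolding satisfies_def by simp
    then have "word_val ?f [0,1,2,3,2,0] = word_val ?f [0,1,2,3,0,2,0]" by (rule spec)
    then show ?thesis by (simp add: mult.assoc)
  qed
  have pr: "\<forall>a\<in>set v2. count_list (v1 @ v2 @ [x] @ v3) a \<noteq> 1"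
    using assms(3) by (simp add: simple_in_def)
  show ?thesis unfolding satisfies_def
    using mainL[OF E1 E2 assms(2) pr] by simp
qed

end
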